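(* For every extreme point $(x,y,z)$ of the polyhedron GVC-LP, the vector $x$ is half-integral, i.e. $x_i\in\{0,\tfrac12,1\}$ for all $i\in V$.
   Context: Let $G=(V,E)$ be a graph. GVC-LP is the linear programming relaxation of the following mixed integer formulation of the generalized vertex cover problem (objective: minimize $\sum_{i\in V}c_ix_i+\sum_{(i,j)\in E}(q^2_{ij}-q^1_{ij})y_{ij}+\sum_{(i,j)\in E}(q^0_{ij}-q^1_{ij})z_{ij}$), with variables $x_i$ ($i\in V$), $y_{ij},z_{ij}$ ($(i,j)\in E$) and constraints: $x_i+x_j\le 1+y_{ij}$, $x_i\ge y_{ij}$, $x_j\ge y_{ij}$, $z_{ij}=1-x_i-x_j+y_{ij}$, $y_{ij}\ge 0$ for all $(i,j)\in E$, and $x_i\in\{0,1\}$, $z_{ij}\in\{0,1\}$. In GVC-LP the integrality constraints are replaced by $0\le x_i\le 1$ and $0\le z_{ij}\le 1$. Extreme points refer to the feasible region of GVC-LP. *)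

theory Defs
  imports "HOL-Analysis.Analysis"
begin

text \<open>Graph G = (V,E): V is the finite type 'v (V = UNIV), E is a set of
  ordered pairs, each undirected edge listed once with a chosen orientation.
  A point of GVC-LP is a triple (x,y,z) with x indexed by vertices and y,z
  indexed by pairs of vertices; the coordinates of y,z at non-edges are fixed
  to 0 (they are not variables of the LP), which is an affine isomorphism with
  the space of the genuine variables and hence does not affect extreme points.\<close>

definition simple_graph_edges :: "('v \<times> 'v) set \<Rightarrow> bool" where
  "simple_graph_edges E \<longleftrightarrow> (\<forall>(i,j)\<in>E. i \<noteq> j \<and> (j,i) \<notin> E)"

definition gvc_lp ::
  "('v::finite \<times> 'v) set \<Rightarrow> ((real^'v) \<times> (real^('v \<times> 'v)) \<times> (real^('v \<times> 'v))) set" where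
  "gvc_lp E = {(x,y,z).
      (\<forall>i. 0 \<le> x$i \<and> x$i \<le> 1) \<and>
      (\<forall>(i,j)\<in>E.
          x$i + x$j \<le> 1 + y$(i,j) \<and>
          x$i \<ge> y$(i,j) \<and> x$j \<ge> y$(i,j) \<and>
          z$(i,j) = 1 - x$i - x$j + y$(i,j) \<and>
          y$(i,j) \<ge> 0 \<and>
          0 \<le> z$(i,j) \<and> z$(i,j) \<le> 1) \<and>
      (\<forall>e. e \<notin> E \<longrightarrow> y$e = 0 \<and> z$e = 0)}"

end

theory Submission
  imports Defs
begin

lemma step_nonneg:
  fixes g a m t :: real
  assumes "g \<ge> 0" "g = 0 \<Longrightarrow> a = 0" "g > 0 \<Longrightarrow> m \<le> g" "\<bar>a\<bar> \<le> 4" "\<bar>t\<bar> \<le> m/4"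
  shows "0 \<le> g + t*a"
proof (cases "g = 0")
  case True then show ?thesis using assms by simp
next
  case False
  then have g: "m \<le> g" using assms by simp
  have "\<bar>t*a\<bar> \<le> (m/4)*4" unfolding abs_mult
    by (rule mult_mono) (use assms in auto)
  then show ?thesis using g by linarith
qed

definition dd :: "real \<Rightarrow> real" where
  "dd v = (if 0 < v \<and> v < 1/2 then 1 else if 1/2 < v \<and> v < 1 then -1 else 0)"

lemma dd_abs: "\<bar>dd v\<bar> \<le> 1" by (simp add: dd_def)
lemma dd_0: "dd 0 = 0" by (simp add: dd_def)
lemma dd_1: "dd 1 = 0" by (simp add: dd_def)
lemma dd_sum: "0 \<le> a \<Longrightarrow> a \<le> 1 \<Longrightarrow> 0 \<le> b \<Longrightarrow> b \<le> 1 \<Longrightarrow> a + b = 1 \<Longrightarrow> dd a + dd b = 0"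
  by (auto simp: dd_def)
lemma dd_nz: "0 \<le> a \<Longrightarrow> a \<le> 1 \<Longrightarrow> a \<notin> {0, 1/2, 1} \<Longrightarrow> dd a \<noteq> 0"
  by (auto simp: dd_def)

theorem theorem5:
  fixes E :: "('v::finite \<times> 'v) set"
    and x :: "real^'v" and y z :: "real^('v \<times> 'v)"
  assumes "simple_graph_edges E"
    and "(x, y, z) extreme_point_of gvc_lp E"
  shows "\<forall>i. x$i \<in> {0, 1/2, 1}"
proof (rule ccontr)
  assume "\<not> (\<forall>i. x$i \<in> {0, 1/2, 1})"
  then obtain k where k: "x$k \<notin> {0, 1/2, 1}" by blast
  have feas: "(x,y,z) \<in> gvc_lp E" and ext: "\<forall>a \<in> gvc_lp E. \<forall>b \<in> gvc_lp E. (x,y,z) \<notin> open_segment a b"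
    using assms(2) unfolding extreme_point_of_def by auto
  have xb: "\<And>i. 0 \<le> x$i \<and> x$i \<le> 1" using feas unfolding gvc_lp_def by auto
  have eb: "\<And>i j. (i,j) \<in> E \<Longrightarrow> x$i + x$j \<le> 1 + y$(i,j) \<and>
          x$i \<ge> y$(i,j) \<and> x$j \<ge> y$(i,j) \<and> z$(i,j) = 1 - x$i - x$j + y$(i,j) \<and> y$(i,j) \<ge> 0"
    using feas unfolding gvc_lp_def by auto
  have ne: "\<And>e. e \<notin> E \<Longrightarrow> y$e = 0 \<and> z$e = 0" using feas unfolding gvc_lp_def by auto
  define d where "d i = dd (x$i)" for i
  define dl where "dl e = (if e \<in> E then (if y$e = x$(fst e) then d (fst e) else if y$e = x$(snd e) then d (snd e)
      else if y$e = x$(fst e) + x$(snd e) - 1 then d (fst e) + d (snd e) else 0) else 0)" for e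
  define zt where "zt e = (if e \<in> E then dl e - d (fst e) - d (snd e) else 0)" for e
  define T where "T = range (\<lambda>i. x$i) \<union> range (\<lambda>i. 1 - x$i) \<union> range (\<lambda>e. y$e) \<union>
     range (\<lambda>e. x$(fst e) - y$e) \<union> range (\<lambda>e. x$(snd e) - y$e) \<union> range (\<lambda>e. y$e - x$(fst e) - x$(snd e) + 1)"
  define m where "m = Min (insert 1 {t\<in>T. 0 < t})"
  have finT: "finite T" unfolding T_def by simp
  have mpos: "0 < m" unfolding m_def using finT by (subst Min_gr_iff) auto
  have mle: "\<And>t. t \<in> T \<Longrightarrow> 0 < t \<Longrightarrow> m \<le> t" unfolding m_def using finT by (intro Min_le) auto
  have dabs: "\<And>i. \<bar>d i\<bar> \<le> 1" unfolding d_def by (rule dd_abs)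
  have dlabs: "\<And>e. \<bar>dl e\<bar> \<le> 2" unfolding dl_def using dabs
    by (auto simp: abs_le_iff) (smt (verit) dabs)+
  define P where "P t = ((\<chi> i. x$i + t * d i), (\<chi> e. y$e + t * dl e), (\<chi> e. z$e + t * zt e))" for t
  have feasP: "P t \<in> gvc_lp E" if t: "\<bar>t\<bar> \<le> m/4" for t
  proof -
    have V: "0 \<le> x$i + t * d i \<and> x$i + t * d i \<le> 1" for i
    proof
      show "0 \<le> x$i + t * d i"
        by (rule step_nonneg[OF _ _ _ _ t]) (use xb dabs[of i] mle[of "x$i"] in \<open>auto simp: d_def dd_0 T_def\<close>)
      have "0 \<le> (1 - x$i) + t * (- d i)"
        by (rule step_nonneg[OF _ _ _ _ t]) (use xb dabs[of i] mle[of "1 - x$i"] in \<open>auto simp: d_def dd_1 T_def\<close>)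
      then show "x$i + t * d i \<le> 1" by simp
    qed
    have Ed: "0 \<le> (y$(i,j) - x$i - x$j + 1) + t * (dl (i,j) - d i - d j) \<and>
      0 \<le> (x$i - y$(i,j)) + t * (d i - dl (i,j)) \<and>
      0 \<le> (x$j - y$(i,j)) + t * (d j - dl (i,j)) \<and>
      0 \<le> y$(i,j) + t * dl (i,j)" if ij: "(i,j) \<in> E" for i j
    proof (intro conjI)
      note e = eb[OF ij]
      have dl: "dl (i,j) = (if y$(i,j) = x$i then d i else if y$(i,j) = x$j then d j
      else if y$(i,j) = x$i + x$j - 1 then d i + d j else 0)" using ij by (simp add: dl_def)
      have ab: "\<bar>dl (i,j) - d i - d j\<bar> \<le> 4" "\<bar>d i - dl (i,j)\<bar> \<le> 4" "\<bar>d j - dl (i,j)\<bar> \<le> 4" "\<bar>dl (i,j)\<bar> \<le> 4"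
        using dabs[of i] dabs[of j] dlabs[of "(i,j)"] by linarith+
      show "0 \<le> (y$(i,j) - x$i - x$j + 1) + t * (dl (i,j) - d i - d j)"
      proof (rule step_nonneg[OF _ _ _ ab(1) t])
        show "0 \<le> y$(i,j) - x$i - x$j + 1" using e by linarith
        show "y$(i,j) - x$i - x$j + 1 = 0 \<Longrightarrow> dl (i,j) - d i - d j = 0"
          using dl xb[of i] xb[of j] by (auto simp: d_def dd_1)
        show "0 < y$(i,j) - x$i - x$j + 1 \<Longrightarrow> m \<le> y$(i,j) - x$i - x$j + 1"
          by (rule mle) (auto simp: T_def intro!: rangeI[of _ "(i,j)", simplified] image_eqI[of _ _ "(i,j)"])
      qed
      show "0 \<le> (x$i - y$(i,j)) + t * (d i - dl (i,j))"
      proof (rule step_nonneg[OF _ _ _ ab(2) t])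
        show "0 \<le> x$i - y$(i,j)" using e by linarith
        show "x$i - y$(i,j) = 0 \<Longrightarrow> d i - dl (i,j) = 0" using dl by auto
        show "0 < x$i - y$(i,j) \<Longrightarrow> m \<le> x$i - y$(i,j)"
          by (rule mle) (auto simp: T_def intro!: image_eqI[of _ _ "(i,j)"])
      qed
      show "0 \<le> (x$j - y$(i,j)) + t * (d j - dl (i,j))"
      proof (rule step_nonneg[OF _ _ _ ab(3) t])
        show "0 \<le> x$j - y$(i,j)" using e by linarith
        show "x$j - y$(i,j) = 0 \<Longrightarrow> d j - dl (i,j) = 0" using dl by (auto simp: d_def)
        show "0 < x$j - y$(i,j) \<Longrightarrow> m \<le> x$j - y$(i,j)"
          by (rule mle) (auto simp: T_def intro!: image_eqI[of _ _ "(i,j)"])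
      qed
      show "0 \<le> y$(i,j) + t * dl (i,j)"
      proof (rule step_nonneg[OF _ _ _ ab(4) t])
        show "0 \<le> y$(i,j)" using e by linarith
        show "y$(i,j) = 0 \<Longrightarrow> dl (i,j) = 0"
          using dl xb[of i] xb[of j] dd_sum[of "x$i" "x$j"] by (auto simp: d_def dd_0)
        show "0 < y$(i,j) \<Longrightarrow> m \<le> y$(i,j)"
          by (rule mle) (auto simp: T_def)
      qed
    qed
    show ?thesis
      unfolding gvc_lp_def P_def
    proof (clarsimp, intro conjI allI impI)
      show "\<And>i. 0 \<le> x$i + t * d i" "\<And>i. x$i + t * d i \<le> 1" using V by auto
      show "\<forall>(i,j)\<in>E. x$i + t * d i + (x$j + t * d j) \<le> 1 + (y$(i,j) + t * dl (i,j)) \<and>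
          y$(i,j) + t * dl (i,j) \<le> x$i + t * d i \<and> y$(i,j) + t * dl (i,j) \<le> x$j + t * d j \<and>
          z$(i,j) + t * zt (i,j) = 1 - (x$i + t * d i) - (x$j + t * d j) + (y$(i,j) + t * dl (i,j)) \<and>
          0 \<le> y$(i,j) + t * dl (i,j) \<and> 0 \<le> z$(i,j) + t * zt (i,j) \<and> z$(i,j) + t * zt (i,j) \<le> 1"
      proof (clarify)
        fix i j assume ij: "(i,j) \<in> E"
        have zz: "z$(i,j) + t * zt (i,j) = 1 - (x$i + t * d i) - (x$j + t * d j) + (y$(i,j) + t * dl (i,j))"
          using eb[OF ij] ij by (simp add: zt_def algebra_simps)
        show "x$i + t * d i + (x$j + t * d j) \<le> 1 + (y$(i,j) + t * dl (i,j)) \<and>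
          y$(i,j) + t * dl (i,j) \<le> x$i + t * d i \<and> y$(i,j) + t * dl (i,j) \<le> x$j + t * d j \<and>
          z$(i,j) + t * zt (i,j) = 1 - (x$i + t * d i) - (x$j + t * d j) + (y$(i,j) + t * dl (i,j)) \<and>
          0 \<le> y$(i,j) + t * dl (i,j) \<and> 0 \<le> z$(i,j) + t * zt (i,j) \<and> z$(i,j) + t * zt (i,j) \<le> 1"
          using Ed[OF ij] V[of i] V[of j] zz by (simp add: algebra_simps)
      qed
      show "\<And>e. e \<notin> E \<Longrightarrow> y$e + t * dl e = 0" "\<And>e. e \<notin> E \<Longrightarrow> z$e + t * zt e = 0"
        using ne by (auto simp: dl_def zt_def)
    qed
  qed
  define \<epsilon> where "\<epsilon> = m/4"
  have A: "P \<epsilon> \<in> gvc_lp E" and B: "P (-\<epsilon>) \<in> gvc_lp E"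
    using feasP mpos unfolding \<epsilon>_def by auto
  have dk: "d k \<noteq> 0" unfolding d_def using xb[of k] k by (intro dd_nz) auto
  have neq: "P \<epsilon> \<noteq> P (-\<epsilon>)"
  proof
    assume "P \<epsilon> = P (-\<epsilon>)"
    then have "fst (P \<epsilon>) $ k = fst (P (-\<epsilon>)) $ k" by simp
    then have "x$k + \<epsilon> * d k = x$k + (-\<epsilon>) * d k" unfolding P_def by simp
    then show False using dk mpos unfolding \<epsilon>_def by simp
  qed
  have mid: "midpoint (P \<epsilon>) (P (-\<epsilon>)) = (x,y,z)"
    unfolding midpoint_def P_def by (simp add: vec_eq_iff algebra_simps)
  have "(x,y,z) \<in> open_segment (P \<epsilon>) (P (-\<epsilon>))"
    using neq mid midpoint_in_open_segment by metis
  then show False using ext A B by blast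
qed

end
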